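(* Let $\zeta_5=\exp(2\pi i/5)$, $K=\mathbb{Q}(\zeta_5)\subset\mathbb{C}$, and $\mathcal{O}_K=\mathbb{Z}[\zeta_5]$ its ring of integers. Let $\sigma:K\to\mathbb{C}$ be the field embedding with $\sigma(\zeta_5)=\zeta_5^2$, and set $$\mathcal{S}=\{z\in\mathcal{O}_K : |\sigma(z)|\le 1\}\subseteq\mathbb{C}.$$ Then for every $z\in\mathcal{S}$, $$\min_{z'\in\mathcal{S}\setminus\{z\}}|z'-z|\in\left\{\tfrac{\sqrt5-1}{2},\,1\right\}.$$
   Context: Elements of $K$ are regarded as complex numbers via the inclusion $K\subset\mathbb{C}$; $|\cdot|$ is the complex absolute value. *)

theory Defs
  imports "HOL-Analysis.Analysis"
begin

definition zeta5 :: complex where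
  "zeta5 = exp (2 * of_real pi * \<i> / 5)"

text \<open>Integral coordinates with respect to the Z-basis 1, zeta, zeta^2, zeta^3 of Z[zeta].\<close>
definition coords5 :: "int \<Rightarrow> int \<Rightarrow> int \<Rightarrow> int \<Rightarrow> complex \<Rightarrow> complex" where
  "coords5 a b c d w = of_int a + of_int b * w + of_int c * w^2 + of_int d * w^3"

definition OK5 :: "complex set" where
  "OK5 = {coords5 a b c d zeta5 | a b c d. True}"

text \<open>The embedding sigma with sigma(zeta) = zeta^2, on O_K:
  sigma(a + b zeta + c zeta^2 + d zeta^3) = a + b zeta^2 + c zeta^4 + d zeta^6.\<close>
definition sigma5 :: "complex \<Rightarrow> complex" where
  "sigma5 z = (THE w. \<exists>a b c d. z = coords5 a b c d zeta5 \<and> w = coords5 a b c d (zeta5^2))"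

definition S5 :: "complex set" where
  "S5 = {z \<in> OK5. cmod (sigma5 z) \<le> 1}"

end

theory Submission
  imports Defs
begin

definition gg :: real where "gg = (sqrt 5 - 1) / 2"

lemma gg_pos: "gg > 0" unfolding gg_def
proof -
  have "sqrt 5 > sqrt 1" by (subst real_sqrt_less_iff) simp
  then show "(sqrt 5 - 1) / 2 > 0" by simp
qed

lemma gg_eq: "gg^2 + gg = 1"
  unfolding gg_def by (simp add: power2_eq_square field_simps)

lemma zeta_cis: "zeta5 = cis (2*pi/5)"
  unfolding zeta5_def cis_conv_exp by (simp add: algebra_simps)

lemma zeta_pow5: "zeta5^5 = 1"
  unfolding zeta_cis
proof -
  have "cis (2*pi/5)^5 = cis (real 5 * (2*pi/5))" by (rule Complex.DeMoivre)
  also have "real 5 * (2*pi/5) = 2*pi" by simp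
  finally show "cis (2*pi/5)^5 = 1" by simp
qed

lemma zeta_norm: "cmod zeta5 = 1" unfolding zeta_cis by simp

lemma zeta_cnj: "cnj zeta5 = zeta5^4"
proof -
  have a: "zeta5 * cnj zeta5 = 1" using complex_norm_square[of zeta5] zeta_norm by simp
  have b: "zeta5 * zeta5^4 = 1" using zeta_pow5 by (simp add: power_Suc[symmetric] del: power_Suc)
  have "zeta5 \<noteq> 0" using zeta_norm by auto
  then show ?thesis using a b by (metis mult_left_cancel)
qed

lemma zeta_ne1: "zeta5 \<noteq> 1"
proof -
  have "Im zeta5 = sin (2*pi/5)" unfolding zeta_cis by simp
  moreover have "sin (2*pi/5) > 0" by (rule sin_gt_zero) auto
  ultimately show ?thesis by auto
qed

lemma zeta_sum: "1 + zeta5 + zeta5^2 + zeta5^3 + zeta5^4 = 0"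
proof -
  have "(zeta5 - 1) * (1 + zeta5 + zeta5^2 + zeta5^3 + zeta5^4) = zeta5^5 - 1"
    by (simp add: algebra_simps power_Suc eval_nat_numeral)
  also have "\<dots> = 0" using zeta_pow5 by simp
  finally show ?thesis using zeta_ne1 by simp
qed

lemma zeta_t: "zeta5 + zeta5^4 = of_real gg"
proof -
  define t where "t = 2 * cos (2*pi/5)"
  have e: "zeta5 + zeta5^4 = of_real t"
    using complex_add_cnj[of zeta5] unfolding zeta_cnj t_def by (simp add: zeta_cis)
  have tp: "t > 0" proof -
    have "- (pi/2) < 2*pi/5" "2*pi/5 < pi/2" using pi_gt_zero by linarith+
    then have "cos (2*pi/5) > 0" by (rule cos_gt_zero_pi)
    then show ?thesis by (simp add: t_def)
  qed
  have "(zeta5 + zeta5^4)^2 + (zeta5 + zeta5^4) - 1 = 0"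
    using zeta_pow5 zeta_sum by algebra
  then have "of_real (t^2 + t - 1) = (0::complex)" unfolding e by simp
  then have q: "t^2 + t - 1 = 0" by (simp only: of_real_eq_0_iff)
  have "(t - gg) * (t + 1 + gg) = 0" using q gg_eq by (simp add: algebra_simps power2_eq_square)
  moreover have "t + 1 + gg > 0" using tp gg_pos by simp
  ultimately have "t = gg" by simp
  then show ?thesis using e by simp
qed

lemma zeta2_facts:
  "(zeta5^2)^5 = 1" "cnj (zeta5^2) = (zeta5^2)^4"
  "zeta5^2 + (zeta5^2)^4 = - 1 - of_real gg" "(zeta5^2)^2 + (zeta5^2)^3 = of_real gg"
proof -
  show "(zeta5^2)^5 = 1" using zeta_pow5 by algebra
  show "cnj (zeta5^2) = (zeta5^2)^4" using zeta_pow5 by (simp add: zeta_cnj)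
  show "zeta5^2 + (zeta5^2)^4 = - 1 - of_real gg" using zeta_pow5 zeta_sum zeta_t by algebra
  show "(zeta5^2)^2 + (zeta5^2)^3 = of_real gg" using zeta_pow5 zeta_sum zeta_t by algebra
qed

lemma norm_gen:
  assumes h5: "x^5 = 1" and hc: "cnj x = x^4"
  shows "of_real ((cmod (coords5 a b c d x))^2) = of_int (a^2+b^2+c^2+d^2)
     + of_int (a*b+b*c+c*d) * (x + x^4) + of_int (a*c+b*d+a*d) * (x^2+x^3)"
proof -
  have "cnj (coords5 a b c d x) = of_int a + of_int b * x^4 + of_int c * (x^4)^2 + of_int d * (x^4)^3"
    unfolding coords5_def by (simp add: hc)
  then have "of_real ((cmod (coords5 a b c d x))^2) = coords5 a b c d x *
     (of_int a + of_int b * x^4 + of_int c * (x^4)^2 + of_int d * (x^4)^3)"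
    by (metis complex_norm_square)
  also have "\<dots> = of_int (a^2+b^2+c^2+d^2)
     + of_int (a*b+b*c+c*d) * (x + x^4) + of_int (a*c+b*d+a*d) * (x^2+x^3)"
    unfolding coords5_def using h5 by simp algebra
  finally show ?thesis .
qed

definition KK :: "int \<Rightarrow> int \<Rightarrow> int \<Rightarrow> int \<Rightarrow> int" where
  "KK a b c d = (a^2+b^2+c^2+d^2) - (a*c+b*d+a*d)"
definition MM :: "int \<Rightarrow> int \<Rightarrow> int \<Rightarrow> int \<Rightarrow> int" where
  "MM a b c d = (a*b+b*c+c*d) - (a*c+b*d+a*d)"

lemma norm_z: "(cmod (coords5 a b c d zeta5))^2 = KK a b c d + MM a b c d * gg"
proof -
  have "of_real ((cmod (coords5 a b c d zeta5))^2) = (of_real (KK a b c d + MM a b c d * gg) :: complex)"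
    unfolding norm_gen[OF zeta_pow5 zeta_cnj] KK_def MM_def
    using zeta_sum zeta_t zeta_pow5 by simp algebra
  then show ?thesis by (simp only: of_real_eq_iff)
qed

lemma norm_s: "(cmod (coords5 a b c d (zeta5^2)))^2 = KK a b c d - MM a b c d - MM a b c d * gg"
proof -
  have "of_real ((cmod (coords5 a b c d (zeta5^2)))^2) = (of_real (KK a b c d - MM a b c d - MM a b c d * gg) :: complex)"
    unfolding norm_gen[OF zeta2_facts(1,2)] KK_def MM_def zeta2_facts(3,4)
    by simp algebra
  then show ?thesis by (simp only: of_real_eq_iff)
qed

lemma sq5_descent: "(n::int)^2 = 5*m^2 \<Longrightarrow> m = 0"
proof (induction "nat \<bar>m\<bar>" arbitrary: n m rule: less_induct)
  case less
  have p5: "prime (5::int)" by simp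
  have "5 dvd n^2" using less.prems by simp
  then have "5 dvd n" using p5 prime_dvd_power by blast
  then obtain n' where n': "n = 5*n'" by blast
  have "m^2 = 5*n'^2" using less.prems n' by (simp add: power_mult_distrib)
  then have "5 dvd m^2" by simp
  then have "5 dvd m" using p5 prime_dvd_power by blast
  then obtain m' where m': "m = 5*m'" by blast
  have e: "n'^2 = 5*m'^2" using \<open>m^2 = 5*n'^2\<close> m' by (simp add: power_mult_distrib)
  show "m = 0"
  proof (rule ccontr)
    assume "m \<noteq> 0"
    then have "nat \<bar>m'\<bar> < nat \<bar>m\<bar>" using m' by auto
    then have "m' = 0" using less.hyps e by blast
    then show False using m' \<open>m \<noteq> 0\<close> by simp
  qed
qed

lemma gg_indep: assumes "of_int k + of_int m * gg = 0" shows "k = 0 \<and> m = 0"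
proof -
  have "m = 0"
  proof (rule ccontr)
    assume m0: "m \<noteq> 0"
    have g: "gg = - of_int k / of_int m" using assms m0 by (simp add: field_simps)
    have "(- of_int k / of_int m)^2 + (- of_int k / of_int m) = (1::real)" using gg_eq g by simp
    then have "of_int k ^2 - of_int k * of_int m - of_int m ^2 = (0::real)"
      using m0 by (simp add: field_simps power2_eq_square)
    then have "k^2 - k*m - m^2 = 0" by (metis (mono_tags) of_int_eq_0_iff of_int_diff of_int_mult of_int_power)
    then have "(2*k-m)^2 = 5*m^2" by (simp add: power2_eq_square algebra_simps)
    then show False using sq5_descent m0 by blast
  qed
  then show ?thesis using assms by simp
qed

lemma sq_mod5: "(n::int)^2 mod 5 \<in> {0,1,4}"
proof -
  have "n^2 mod 5 = (n mod 5)^2 mod 5" by (simp add: power_mod)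
  moreover have "n mod 5 \<in> {0,1,2,3,4}" by auto
  ultimately show ?thesis by auto
qed

lemma coords_diff: "coords5 a b c d x - coords5 a' b' c' d' x = coords5 (a-a') (b-b') (c-c') (d-d') x"
  unfolding coords5_def by (simp add: algebra_simps)

lemma coords_zero_s: assumes "coords5 a b c d zeta5 = 0" shows "coords5 a b c d (zeta5^2) = 0"
proof -
  have "of_int (KK a b c d) + of_int (MM a b c d) * gg = 0" using norm_z[of a b c d] assms by simp
  then have "KK a b c d = 0 \<and> MM a b c d = 0" by (rule gg_indep)
  then have "(cmod (coords5 a b c d (zeta5^2)))^2 = 0" using norm_s[of a b c d] by simp
  then show ?thesis by simp
qed

lemma sigma_eq: "sigma5 (coords5 a b c d zeta5) = coords5 a b c d (zeta5^2)"
  unfolding sigma5_def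
proof (rule the_equality)
  show "\<exists>a' b' c' d'. coords5 a b c d zeta5 = coords5 a' b' c' d' zeta5 \<and>
      coords5 a b c d (zeta5^2) = coords5 a' b' c' d' (zeta5^2)" by blast
  fix w assume "\<exists>a' b' c' d'. coords5 a b c d zeta5 = coords5 a' b' c' d' zeta5 \<and> w = coords5 a' b' c' d' (zeta5^2)"
  then obtain a' b' c' d' where h: "coords5 a b c d zeta5 = coords5 a' b' c' d' zeta5"
     "w = coords5 a' b' c' d' (zeta5^2)" by blast
  have "coords5 (a-a') (b-b') (c-c') (d-d') zeta5 = 0" using h(1) coords_diff[of a b c d zeta5 a' b' c' d'] by simp
  then have "coords5 (a-a') (b-b') (c-c') (d-d') (zeta5^2) = 0" by (rule coords_zero_s)
  then show "w = coords5 a b c d (zeta5^2)" using h(2) coords_diff[of a b c d "zeta5^2" a' b' c' d'] by simp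
qed

lemma S5_iff: "z \<in> S5 \<longleftrightarrow> (\<exists>a b c d. z = coords5 a b c d zeta5 \<and> cmod (coords5 a b c d (zeta5^2)) \<le> 1)"
  unfolding S5_def OK5_def by (auto simp: sigma_eq; blast)

lemma small_unit:
  assumes w0: "coords5 a b c d zeta5 \<noteq> 0" and s2: "cmod (coords5 a b c d (zeta5^2)) \<le> 2"
    and w1: "cmod (coords5 a b c d zeta5) < 1"
  shows "cmod (coords5 a b c d zeta5) = gg"
proof -
  define K where "K = KK a b c d"
  define M where "M = MM a b c d"
  define u where "u = (cmod (coords5 a b c d zeta5))^2"
  define v where "v = (cmod (coords5 a b c d (zeta5^2)))^2"
  have u: "u = K + M*gg" unfolding u_def K_def M_def by (rule norm_z)
  have v: "v = K - M - M*gg" unfolding v_def K_def M_def by (rule norm_s)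
  have up: "u > 0" unfolding u_def using w0 by simp
  have u1: "u < 1" unfolding u_def using w1 by (simp add: power_less_one_iff)
  have v4: "v \<le> 4" unfolding v_def using s2 power_mono[OF s2, of 2] by simp
  have v0: "v \<noteq> 0"
  proof
    assume "v = 0"
    then have "of_int (K - M) + of_int (-M) * gg = 0" using v by simp
    then have "K - M = 0 \<and> -M = 0" by (rule gg_indep)
    then show False using u up by simp
  qed
  have vp: "v > 0" using v0 unfolding v_def by simp
  define N where "N = K^2 - K*M - M^2"
  have uv: "u * v = of_int N" unfolding N_def u v
  proof -
    have "(K + M*gg) * (K - M - M*gg) = K^2 - K*M - M^2 * (gg^2 + gg)"
      by (simp add: algebra_simps power2_eq_square)
    then show "(K + M*gg) * (K - M - M*gg) = of_int (K^2 - K*M - M^2)" using gg_eq by simp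
  qed
  have uv4: "u * v \<le> u * 4" using up v4 by (simp add: mult_left_mono)
  have "u * v < 4" using uv4 u1 by linarith
  then have N4: "N < 4" using uv by simp
  have "u * v > 0" using up vp by simp
  then have N0: "N > 0" using uv by simp
  have e4: "4*N + 5*M^2 = (2*K-M)^2" unfolding N_def by (simp add: power2_eq_square algebra_simps)
  have "N = 1"
  proof -
    have c: "N = 1 \<or> N = 2 \<or> N = 3" using N0 N4 by linarith
    have "(2*K-M)^2 mod 5 \<in> {0,1,4}" by (rule sq_mod5)
    moreover have "(2*K-M)^2 mod 5 = (4*N) mod 5" unfolding e4[symmetric] by simp
    ultimately have m: "(4*N) mod 5 \<in> {0,1,4}" by simp
    show ?thesis using c m by auto
  qed
  then have uv1: "u * v = 1" using uv by simp
  define P where "P = 2*K - M"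
  have Puv: "of_int P = u + v" unfolding P_def u v by simp
  have "u \<ge> 1/4" using uv1 uv4 by linarith
  have "u + v > 2"
  proof -
    have "(u - 1)^2 > 0" using u1 by simp
    then have "u^2 + 1 > 2*u" by (simp add: power2_eq_square algebra_simps)
    then have "u * u + u * v > 2 * u" using uv1 by (simp add: power2_eq_square)
    then have "u * (u + v) > u * 2" by (simp add: algebra_simps)
    then show ?thesis using up mult_less_cancel_left_pos by blast
  qed
  then have P2: "P > 2" using Puv by linarith
  have "P < 5" using Puv u1 v4 by linarith
  have PM: "P^2 - 5*M^2 = 4" using e4 \<open>N = 1\<close> unfolding P_def by simp
  have "P = 3 \<or> P = 4" using P2 \<open>P < 5\<close> by auto
  moreover have "P \<noteq> 4"
  proof
    assume "P = 4" then have "5*M^2 = 12" using PM by simp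
    then have "(5*M^2) mod 5 = (12::int) mod 5" by simp
    then show False by simp
  qed
  ultimately have P3: "P = 3" by blast
  then have "M^2 = 1" using PM by simp
  then have "M = 1 \<or> M = -1" by (simp add: power2_eq_1_iff)
  moreover have "M \<noteq> 1"
  proof
    assume "M = 1" then have "K = 2" using P3 P_def by simp
    then show False using u u1 \<open>M = 1\<close> gg_pos by simp
  qed
  ultimately have "M = -1" by blast
  then have "K = 1" using P3 P_def by simp
  then have "u = gg^2" using u \<open>M = -1\<close> gg_eq by simp
  then show ?thesis unfolding u_def using gg_pos
    by (metis norm_ge_zero power2_eq_iff_nonneg less_imp_le)
qed

lemma sum4: "(\<Sum>j<(5::nat). (2 * f j)^2) = 4 * (\<Sum>j<5. (f j)^2 :: real)"
  by (simp add: power_mult_distrib sum_distrib_left)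

lemma frame:
  "(\<Sum>j<5. (Re (s * cnj (zeta5^j)))^2) = 5/2 * (cmod s)^2"
proof -
  have r: "of_real (2 * Re (s * cnj (zeta5^j))) = s * zeta5^(4*j) + cnj s * zeta5^j" for j
  proof -
    have c1: "cnj (zeta5^j) = zeta5^(4*j)" by (simp add: zeta_cnj power_mult)
    have c2: "cnj (s * cnj (zeta5^j)) = cnj s * zeta5^j" by simp
    show ?thesis by (metis c1 c2 complex_add_cnj)
  qed
  have r2: "of_real ((2 * Re (s * cnj (zeta5^j)))^2) = (s * zeta5^(4*j) + cnj s * zeta5^j)^2" for j
    using r[of j] by (metis of_real_power)
  have "of_real (\<Sum>j<5. (2 * Re (s * cnj (zeta5^j)))^2) = (\<Sum>j<5. (s * zeta5^(4*j) + cnj s * zeta5^j)^2)"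
    by (simp only: of_real_sum r2)
  also have "\<dots> = (s * zeta5^0 + cnj s * zeta5^0)^2 + (s * zeta5^4 + cnj s * zeta5^1)^2
      + (s * zeta5^8 + cnj s * zeta5^2)^2 + (s * zeta5^12 + cnj s * zeta5^3)^2
      + (s * zeta5^16 + cnj s * zeta5^4)^2"
    by (simp add: eval_nat_numeral)
  also have "\<dots> = 10 * (s * cnj s)"
    using zeta_pow5 zeta_sum by algebra
  also have "\<dots> = of_real (10 * (cmod s)^2)" by (simp only: of_real_mult complex_norm_square) simp
  finally have "(\<Sum>j<5. (2 * Re (s * cnj (zeta5^j)))^2) = 10 * (cmod s)^2"
    by (simp only: of_real_eq_iff)
  then show ?thesis unfolding sum4[of "\<lambda>j. Re (s * cnj (zeta5^j))"] by simp
qed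

lemma cmod_add_sq: "(cmod (s + e))^2 = (cmod s)^2 + 2 * Re (s * cnj e) + (cmod e)^2"
  by (simp only: cmod_power2) (simp add: power2_eq_square algebra_simps)

lemma cover:
  assumes "cmod s \<le> 1"
  shows "\<exists>j<5. \<exists>sg \<in> {1::int, -1}. cmod (s + of_int sg * zeta5^j) \<le> 1"
proof -
  have "\<exists>j<5. (Re (s * cnj (zeta5^j)))^2 \<ge> (cmod s)^2 / 2"
  proof (rule ccontr)
    assume "\<not> ?thesis"
    then have "\<forall>j\<in>{..<5::nat}. (Re (s * cnj (zeta5^j)))^2 < (cmod s)^2 / 2" by auto
    then have lt: "(\<Sum>j<5. (Re (s * cnj (zeta5^j)))^2) < (\<Sum>j<(5::nat). (cmod s)^2 / 2)"
      by (intro sum_strict_mono) (auto simp: lessThan_empty_iff)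
    show False using lt frame[of s] by simp
  qed
  then obtain j where j: "j < 5" "(Re (s * cnj (zeta5^j)))^2 \<ge> (cmod s)^2 / 2" by blast
  define r where "r = Re (s * cnj (zeta5^j))"
  define sg where "sg = (if r \<ge> 0 then -1 else (1::int))"
  have nz: "cmod (zeta5^j) = 1" by (simp add: norm_power zeta_norm)
  have "Re (s * cnj (of_int sg * zeta5^j)) = of_int sg * r" unfolding r_def by (simp add: algebra_simps)
  also have "\<dots> = - \<bar>r\<bar>" unfolding sg_def by auto
  finally have re: "Re (s * cnj (of_int sg * zeta5^j)) = - \<bar>r\<bar>" .
  have n1: "cmod (of_int sg * zeta5^j) = 1" using nz unfolding sg_def by (simp add: norm_mult)
  have cs: "(cmod s)^2 \<le> 1" using assms by (simp add: power_le_one)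
  have "((cmod s)^2)^2 \<le> (cmod s)^2"
    using cs mult_left_le_one_le[of "(cmod s)^2" "(cmod s)^2"] by (simp only: power2_eq_square[of "(cmod s)^2"]) simp
  also have "\<dots> \<le> (2 * \<bar>r\<bar>)^2"
  proof -
    have jr: "r^2 \<ge> (cmod s)^2 / 2" using j(2) unfolding r_def .
    have "(2 * \<bar>r\<bar>)^2 = 4 * r^2" by (simp add: power_mult_distrib)
    moreover have "r^2 \<ge> 0" by simp
    ultimately show ?thesis using jr by linarith
  qed
  finally have "(cmod s)^2 \<le> 2 * \<bar>r\<bar>" by (rule power2_le_imp_le) simp
  then have "(cmod (s + of_int sg * zeta5^j))^2 \<le> 1"
    unfolding cmod_add_sq re n1 by simp
  then have "cmod (s + of_int sg * zeta5^j) \<le> 1" by (simp add: power_le_one_iff)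
  then show ?thesis using j(1) unfolding sg_def by (auto split: if_splits)
qed

lemma coords_add: "coords5 (a+a') (b+b') (c+c') (d+d') x = coords5 a b c d x + coords5 a' b' c' d' x"
  unfolding coords5_def by (simp add: algebra_simps)

lemma coords_smult: "coords5 (k*a) (k*b) (k*c) (k*d) x = of_int k * coords5 a b c d x"
  unfolding coords5_def by (simp add: algebra_simps)

lemma units: "j < 5 \<Longrightarrow> \<exists>a b c d. coords5 a b c d (zeta5^2) = zeta5^j \<and> cmod (coords5 a b c d zeta5) = 1"
proof -
  assume "j < 5"
  then have "j = 0 \<or> j = 1 \<or> j = 2 \<or> j = 3 \<or> j = 4" by auto
  moreover have "coords5 1 0 0 0 (zeta5^2) = zeta5^0 \<and> cmod (coords5 1 0 0 0 zeta5) = 1"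
    unfolding coords5_def by simp
  moreover have "coords5 0 0 0 1 (zeta5^2) = zeta5^1 \<and> cmod (coords5 0 0 0 1 zeta5) = 1"
  proof
    show "coords5 0 0 0 1 (zeta5^2) = zeta5^1" unfolding coords5_def using zeta_pow5 by simp algebra
    show "cmod (coords5 0 0 0 1 zeta5) = 1" unfolding coords5_def by (simp add: norm_power zeta_norm)
  qed
  moreover have "coords5 0 1 0 0 (zeta5^2) = zeta5^2 \<and> cmod (coords5 0 1 0 0 zeta5) = 1"
    unfolding coords5_def by (simp add: zeta_norm)
  moreover have "coords5 (-1) (-1) (-1) (-1) (zeta5^2) = zeta5^3 \<and> cmod (coords5 (-1) (-1) (-1) (-1) zeta5) = 1"
  proof
    show "coords5 (-1) (-1) (-1) (-1) (zeta5^2) = zeta5^3" unfolding coords5_def using zeta_pow5 zeta_sum by simp algebra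
    have "coords5 (-1) (-1) (-1) (-1) zeta5 = zeta5^4" unfolding coords5_def using zeta_pow5 zeta_sum by simp algebra
    then show "cmod (coords5 (-1) (-1) (-1) (-1) zeta5) = 1" by (simp add: norm_power zeta_norm)
  qed
  moreover have "coords5 0 0 1 0 (zeta5^2) = zeta5^4 \<and> cmod (coords5 0 0 1 0 zeta5) = 1"
    unfolding coords5_def by (simp add: norm_power zeta_norm flip: power_mult)
  ultimately show ?thesis by blast
qed

lemma exists1: assumes "z \<in> S5" shows "\<exists>z' \<in> S5 - {z}. cmod (z' - z) = 1"
proof -
  obtain a b c d where z: "z = coords5 a b c d zeta5" and s1: "cmod (coords5 a b c d (zeta5^2)) \<le> 1"
    using assms S5_iff by blast
  obtain j sg where j: "j < 5" "sg \<in> {1::int, -1}"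
    and c: "cmod (coords5 a b c d (zeta5^2) + of_int sg * zeta5^j) \<le> 1"
    using cover[OF s1] by blast
  obtain a' b' c' d' where u: "coords5 a' b' c' d' (zeta5^2) = zeta5^j" "cmod (coords5 a' b' c' d' zeta5) = 1"
    using units[OF j(1)] by blast
  define z' where "z' = coords5 (a + sg*a') (b + sg*b') (c + sg*c') (d + sg*d') zeta5"
  have sgn: "cmod (of_int sg :: complex) = 1" using j(2) by auto
  have d: "z' - z = of_int sg * coords5 a' b' c' d' zeta5"
    unfolding z'_def z coords_add coords_smult by simp
  have n: "cmod (z' - z) = 1" unfolding d using sgn u(2) by (simp add: norm_mult)
  have "cmod (coords5 (a + sg*a') (b + sg*b') (c + sg*c') (d + sg*d') (zeta5^2)) \<le> 1"
    using c u(1) by (simp add: coords_add coords_smult)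
  then have "z' \<in> S5" unfolding S5_iff z'_def by blast
  moreover have "z' \<noteq> z" using n by auto
  ultimately show ?thesis using n by blast
qed

lemma lower: assumes "z \<in> S5" "z' \<in> S5" "z' \<noteq> z"
  shows "gg \<le> cmod (z' - z) \<and> (cmod (z' - z) < 1 \<longrightarrow> cmod (z' - z) = gg)"
proof -
  obtain a b c d where z: "z = coords5 a b c d zeta5" and s1: "cmod (coords5 a b c d (zeta5^2)) \<le> 1"
    using assms(1) S5_iff by blast
  obtain a' b' c' d' where z': "z' = coords5 a' b' c' d' zeta5" and s1': "cmod (coords5 a' b' c' d' (zeta5^2)) \<le> 1"
    using assms(2) S5_iff by blast
  have w: "z' - z = coords5 (a'-a) (b'-b) (c'-c) (d'-d) zeta5" unfolding z z' coords_diff ..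
  have "coords5 (a'-a) (b'-b) (c'-c) (d'-d) (zeta5^2) = coords5 a' b' c' d' (zeta5^2) - coords5 a b c d (zeta5^2)"
    unfolding coords_diff ..
  then have s2: "cmod (coords5 (a'-a) (b'-b) (c'-c) (d'-d) (zeta5^2)) \<le> 2"
    using s1 s1' norm_triangle_ineq4[of "coords5 a' b' c' d' (zeta5^2)" "coords5 a b c d (zeta5^2)"] by simp
  have w0: "coords5 (a'-a) (b'-b) (c'-c) (d'-d) zeta5 \<noteq> 0" using w assms(3) by (metis eq_iff_diff_eq_0)
  have imp: "cmod (z' - z) < 1 \<longrightarrow> cmod (z' - z) = gg"
    unfolding w using small_unit[OF w0 s2] by blast
  have "gg < 1" unfolding gg_def
  proof -
    have "sqrt 5 < sqrt 9" by (subst real_sqrt_less_iff) simp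
    then show "(sqrt 5 - 1) / 2 < 1" by simp
  qed
  then have "gg \<le> cmod (z' - z)" using imp by fastforce
  then show ?thesis using imp by blast
qed

theorem mainTheorem1:
  assumes "z \<in> S5"
  shows "\<exists>d \<in> {(sqrt 5 - 1) / 2, 1}.
           (\<exists>z' \<in> S5 - {z}. cmod (z' - z) = d) \<and>
           (\<forall>z' \<in> S5 - {z}. d \<le> cmod (z' - z))"
proof (cases "\<exists>z' \<in> S5 - {z}. cmod (z' - z) = gg")
  case True
  have "\<forall>z' \<in> S5 - {z}. gg \<le> cmod (z' - z)" using lower[OF assms] by blast
  then show ?thesis using True unfolding gg_def by blast
next
  case False
  have "\<forall>z' \<in> S5 - {z}. 1 \<le> cmod (z' - z)"
  proof
    fix z' assume h: "z' \<in> S5 - {z}"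
    show "1 \<le> cmod (z' - z)"
    proof (rule ccontr)
      assume "\<not> 1 \<le> cmod (z' - z)"
      then have "cmod (z' - z) = gg" using lower[OF assms, of z'] h by auto
      then show False using False h by blast
    qed
  qed
  then show ?thesis using exists1[OF assms] by blast
qed

end
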